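(* Let $(p_{ij})_{i,j\in\{0,1\}}$ be a transition matrix with all $p_{ij}\in(0,1)$, and for $i\in\{0,1\}$, $n\in\mathbb N_0$ let $I_n^i$ be binomially $B(n,p_{i0})$ distributed. Let $(a_i(n))_{n\in\mathbb N_0}$, $(\varepsilon_i(n))_{n\in\mathbb N_0}$, $i\in\{0,1\}$, be real sequences satisfying $$a_i(n)=\mathbb E[a_0(I_n^i)]+\mathbb E[a_1(n-I_n^i)]+\varepsilon_i(n),\qquad i\in\{0,1\},\ n\in\mathbb N.$$ If $\varepsilon_i(n)=O(n^\alpha)$ for some $\alpha\in\mathbb R$ and both $i\in\{0,1\}$, then as $n\to\infty$, $a_i(n)=O(n)$ if $\alpha<1$, $a_i(n)=O(n^\alpha)$ if $\alpha>1$, and $a_i(n)=O(n\log n)$ if $\alpha=1$. *)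

theory Defs
  imports "HOL-Probability.Probability" "HOL-Library.Landau_Symbols"
begin

end

theory Submission
  imports Defs
begin

definition Bn :: "nat \<Rightarrow> real \<Rightarrow> nat \<Rightarrow> real" where
  "Bn n p k = real (n choose k) * p^k * (1-p)^(n-k)"

lemma Bn_nonneg: "0 \<le> p \<Longrightarrow> p \<le> 1 \<Longrightarrow> 0 \<le> Bn n p k"
  unfolding Bn_def by simp

lemma Bn_sum: "(\<Sum>k\<le>n. Bn n p k) = 1"
proof -
  have "(\<Sum>k\<le>n. Bn n p k) = (p + (1-p))^n"
    unfolding Bn_def by (subst binomial_ring) (simp add: atLeast0AtMost)
  then show ?thesis by simp
qed

lemma Bn_sum_q: "(\<Sum>j\<le>m. real (m choose j) * p^j * (1-p)^(Suc m - j)) = 1 - p"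
proof -
  have "(\<Sum>j\<le>m. real (m choose j) * p^j * (1-p)^(Suc m - j)) = 
        (\<Sum>j\<le>m. (1-p) * (real (m choose j) * p^j * (1-p)^(m - j)))"
    by (rule sum.cong) (auto simp: Suc_diff_le)
  also have "\<dots> = (1-p) * (\<Sum>j\<le>m. Bn m p j)"
    by (simp add: sum_distrib_left Bn_def)
  finally show ?thesis by (simp add: Bn_sum)
qed

lemma Bn_sum2: "(\<Sum>k\<le>n. Bn n p k * (real k * real (n-k))) = real n * (real n - 1) * p * (1-p)"
proof (cases n)
  case 0 then show ?thesis by simp
next
  case (Suc m)
  have inner: "real m * (\<Sum>j\<le>m. real ((m-1) choose j) * p^j * (1-p)^(m-j)) = real m * (1-p)"
  proof (cases m)
    case 0 then show ?thesis by simp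
  next
    case (Suc l)
    have "(\<Sum>j\<le>m. real ((m-1) choose j) * p^j * (1-p)^(m-j)) =
          (\<Sum>j\<le>l. real (l choose j) * p^j * (1-p)^(Suc l-j))"
      unfolding Suc by (subst sum.atMost_Suc) simp
    then show ?thesis using Bn_sum_q by simp
  qed
  have "(\<Sum>k\<le>n. Bn n p k * (real k * real (n-k))) =
        (\<Sum>j\<le>m. Bn n p (Suc j) * (real (Suc j) * real (n - Suc j)))"
    unfolding Suc by (subst sum.atMost_Suc_shift) simp
  also have "\<dots> = (\<Sum>j\<le>m. real (Suc m) * p * real m * (real ((m-1) choose j) * p^j * (1-p)^(m-j)))"
  proof (rule sum.cong)
    fix j assume j: "j \<in> {..m}"
    have e1: "real (Suc j) * real (Suc m choose Suc j) = real (Suc m) * real (m choose j)"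
      by (metis Suc_times_binomial_eq mult.commute of_nat_mult)
    have e2: "real (m - j) * real (m choose j) = real m * real ((m-1) choose j)"
      by (metis binomial_absorb_comp of_nat_mult)
    have "Bn n p (Suc j) * (real (Suc j) * real (n - Suc j)) =
          p * (1-p)^(m-j) * p^j * (real (Suc j) * real (Suc m choose Suc j)) * real (m - j)"
      unfolding Bn_def Suc by simp
    also have "\<dots> = p * (1-p)^(m-j) * p^j * real (Suc m) * (real (m - j) * real (m choose j))"
      unfolding e1 by (simp add: algebra_simps)
    also have "\<dots> = real (Suc m) * p * real m * (real ((m-1) choose j) * p^j * (1-p)^(m-j))"
      unfolding e2 by (simp add: algebra_simps)
    finally show "Bn n p (Suc j) * (real (Suc j) * real (n - Suc j)) =
          real (Suc m) * p * real m * (real ((m-1) choose j) * p^j * (1-p)^(m-j))" .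
  qed simp
  also have "\<dots> = real (Suc m) * p * real m * (\<Sum>j\<le>m. real ((m-1) choose j) * p^j * (1-p)^(m-j))"
    by (simp add: sum_distrib_left)
  also have "\<dots> = real (Suc m) * p * (real m * (1-p))"
    using inner by (simp add: ac_simps)
  finally show ?thesis unfolding Suc by (simp add: algebra_simps)
qed

lemma Bn_0: "Bn n p 0 = (1-p)^n" unfolding Bn_def by simp
lemma Bn_n: "Bn n p n = p^n" unfolding Bn_def by simp

lemma pow_sum_lt1:
  fixes p :: real
  assumes "0 < p" "p < 1" "n \<ge> 2"
  shows "p^n + (1-p)^n < 1"
proof -
  have "p^n < p^1" using power_strict_decreasing[of 1 n p] assms by simp
  moreover have "(1-p)^n < (1-p)^1" using power_strict_decreasing[of 1 n "1-p"] assms by simp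
  ultimately show ?thesis by simp
qed

lemma max_principle:
  fixes b :: "nat \<Rightarrow> nat \<Rightarrow> real" and P :: "nat \<Rightarrow> real" and N :: nat
  assumes P: "\<And>i. i \<in> {0,1} \<Longrightarrow> 0 < P i \<and> P i < 1"
  and ineq: "\<And>i n. i \<in> {0,1} \<Longrightarrow> n \<ge> N \<Longrightarrow>
     b i n \<le> (\<Sum>k\<le>n. Bn n (P i) k * b 0 k) + (\<Sum>k\<le>n. Bn n (P i) k * b 1 (n-k))
              - (1 - P i)^n * b 0 0 - P i ^ n * b 1 0"
  shows "\<exists>E. \<forall>n\<ge>1. \<forall>i\<in>{0,1}. b i n \<le> E * real n"
proof -
  define c where "c j k = b j k / real k" for j k
  define N2 where "N2 = max N 2"
  define E where "E = Max ((\<lambda>(j,k). c j k) ` ({0,1::nat} \<times> {1..N2}))"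
  have cle: "c j k \<le> E" if "j\<in>{0,1}" "1\<le>k" "k \<le> N2" for j k
    unfolding E_def by (rule Max_ge) (use that in auto)
  have main: "\<forall>j\<in>{0,1}. c j n \<le> E" if "n \<ge> 1" for n
    using that
  proof (induction n rule: less_induct)
    case (less n)
    show ?case
    proof (cases "n \<le> N2")
      case True then show ?thesis using cle less.prems by auto
    next
      case False
      then have nN: "n \<ge> N" "n \<ge> 2" unfolding N2_def by auto
      have IH: "c j k \<le> E" if "j \<in> {0,1}" "1 \<le> k" "k < n" for j k
        using less.IH that by blast
      define X where "X = max (c 0 n) (c 1 n)"
      have bn: "b j n = real n * c j n" for j using nN by (simp add: c_def)
      have key: "c i n \<le> E + (X - E) * (P i ^ n + (1 - P i)^n)" if i: "i \<in> {0,1}" for i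
      proof -
        define p where "p = P i"
        have p: "0 < p" "p < 1" using P[OF i] p_def by auto
        have f1: "b 0 k - (if k = 0 then b 0 0 else 0) \<le> real k * E + (if k = n then real n * (X - E) else 0)"
          if kn: "k \<le> n" for k
        proof -
          consider "k = 0" | "k = n" | "0 < k" "k < n" using kn by (metis gr0I le_neq_implies_less)
          then show ?thesis
          proof cases
            case 1 then show ?thesis using nN by auto
          next
            case 2
            have "c 0 n \<le> X" by (simp add: X_def)
            then have "real n * c 0 n \<le> real n * X" by (rule mult_left_mono) simp
            moreover have "real n * E + real n * (X - E) = real n * X" by (simp add: algebra_simps)
            ultimately show ?thesis using 2 nN bn[of 0] by simp
          next
            case 3
            have "b 0 k = real k * c 0 k" using 3 by (simp add: c_def)
            also have "\<dots> \<le> real k * E" using IH[of 0 k] 3 by (intro mult_left_mono) auto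
            finally show ?thesis using 3 by auto
          qed
        qed
        have f2: "b 1 (n-k) - (if k = n then b 1 0 else 0) \<le> real (n-k) * E + (if k = 0 then real n * (X - E) else 0)"
          if kn: "k \<le> n" for k
        proof -
          consider "k = 0" | "k = n" | "0 < k" "k < n" using kn by (metis gr0I le_neq_implies_less)
          then show ?thesis
          proof cases
            case 2 then show ?thesis using nN by auto
          next
            case 1
            have "c 1 n \<le> X" by (simp add: X_def)
            then have "real n * c 1 n \<le> real n * X" by (rule mult_left_mono) simp
            moreover have "real n * E + real n * (X - E) = real n * X" by (simp add: algebra_simps)
            ultimately show ?thesis using 1 nN bn[of 1] by simp
          next
            case 3
            have "b 1 (n-k) = real (n-k) * c 1 (n-k)" using 3 by (simp add: c_def)
            also have "\<dots> \<le> real (n-k) * E" using IH[of 1 "n-k"] 3 by (intro mult_left_mono) auto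
            finally show ?thesis using 3 by auto
          qed
        qed
        have d0: "(\<Sum>k\<le>n. Bn n p k * (if k = 0 then v else 0)) = (1-p)^n * v" for v
        proof -
          have "(\<Sum>k\<le>n. Bn n p k * (if k = 0 then v else 0)) = (\<Sum>k\<le>n. if k = 0 then Bn n p k * v else 0)"
            by (rule sum.cong) auto
          then show ?thesis by (simp add: Bn_0)
        qed
        have dn: "(\<Sum>k\<le>n. Bn n p k * (if k = n then v else 0)) = p^n * v" for v
        proof -
          have "(\<Sum>k\<le>n. Bn n p k * (if k = n then v else 0)) = (\<Sum>k\<le>n. if k = n then Bn n p k * v else 0)"
            by (rule sum.cong) auto
          then show ?thesis by (simp add: Bn_n)
        qed
        have s1: "(\<Sum>k\<le>n. Bn n p k * b 0 k) - (1 - p)^n * b 0 0 =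
            (\<Sum>k\<le>n. Bn n p k * (b 0 k - (if k = 0 then b 0 0 else 0)))"
          by (simp add: right_diff_distrib sum_subtractf d0)
        have s2: "(\<Sum>k\<le>n. Bn n p k * b 1 (n-k)) - p^n * b 1 0 =
            (\<Sum>k\<le>n. Bn n p k * (b 1 (n-k) - (if k = n then b 1 0 else 0)))"
          by (simp add: right_diff_distrib sum_subtractf dn)
        have t1: "(\<Sum>k\<le>n. Bn n p k * (b 0 k - (if k = 0 then b 0 0 else 0))) \<le>
             (\<Sum>k\<le>n. Bn n p k * (real k * E + (if k = n then real n * (X - E) else 0)))"
          by (intro sum_mono mult_left_mono f1 Bn_nonneg) (use p in auto)
        have t2: "(\<Sum>k\<le>n. Bn n p k * (b 1 (n-k) - (if k = n then b 1 0 else 0))) \<le>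
             (\<Sum>k\<le>n. Bn n p k * (real (n-k) * E + (if k = 0 then real n * (X - E) else 0)))"
          by (intro sum_mono mult_left_mono f2 Bn_nonneg) (use p in auto)
        have u: "(\<Sum>k\<le>n. Bn n p k * (real k * E + (if k = n then real n * (X - E) else 0))) +
             (\<Sum>k\<le>n. Bn n p k * (real (n-k) * E + (if k = 0 then real n * (X - E) else 0)))
           = (\<Sum>k\<le>n. Bn n p k * (real n * E)) + p^n * (real n * (X - E)) + (1-p)^n * (real n * (X - E))"
        proof -
          have "(\<Sum>k\<le>n. Bn n p k * (real k * E + (if k = n then real n * (X - E) else 0))) +
             (\<Sum>k\<le>n. Bn n p k * (real (n-k) * E + (if k = 0 then real n * (X - E) else 0)))
             = (\<Sum>k\<le>n. Bn n p k * (real k * E + real (n-k) * E)) +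
               (\<Sum>k\<le>n. Bn n p k * (if k = n then real n * (X - E) else 0)) +
               (\<Sum>k\<le>n. Bn n p k * (if k = 0 then real n * (X - E) else 0))"
            by (simp add: sum.distrib distrib_left)
          also have "(\<Sum>k\<le>n. Bn n p k * (real k * E + real (n-k) * E)) = (\<Sum>k\<le>n. Bn n p k * (real n * E))"
            proof (rule sum.cong)
            fix k assume "k \<in> {..n}"
            then have "real (n-k) = real n - real k" by (simp add: of_nat_diff)
            then have "real k * E + real (n-k) * E = real n * E" by (simp add: left_diff_distrib)
            then show "Bn n p k * (real k * E + real (n-k) * E) = Bn n p k * (real n * E)" by simp
          qed simp
          finally show ?thesis by (simp add: d0 dn)
        qed
        have sumE: "(\<Sum>k\<le>n. Bn n p k * (real n * E)) = real n * E"
          using Bn_sum[of n p] by (simp add: sum_distrib_right[symmetric])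
        have "real n * c i n = b i n" by (simp add: bn)
        also have "\<dots> \<le> ((\<Sum>k\<le>n. Bn n p k * b 0 k) - (1 - p)^n * b 0 0) + ((\<Sum>k\<le>n. Bn n p k * b 1 (n-k)) - p^n * b 1 0)"
          using ineq[OF i nN(1)] unfolding p_def by linarith
        also have "\<dots> \<le> (\<Sum>k\<le>n. Bn n p k * (real k * E + (if k = n then real n * (X - E) else 0))) +
             (\<Sum>k\<le>n. Bn n p k * (real (n-k) * E + (if k = 0 then real n * (X - E) else 0)))"
          unfolding s1 s2 using t1 t2 by (rule add_mono)
        also have "\<dots> = real n * E + p^n * (real n * (X - E)) + (1-p)^n * (real n * (X - E))"
          unfolding u sumE ..
        also have "\<dots> = real n * E + real n * ((X - E) * (p^n + (1-p)^n))"
          by (simp add: algebra_simps)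
        finally have "real n * c i n \<le> real n * E + real n * ((X - E) * (p^n + (1-p)^n))" .
        then show ?thesis using nN p_def by (simp add: distrib_left[symmetric])
      qed
      have "X \<le> E"
      proof -
        obtain i where i: "i \<in> {0,1}" "X = c i n" unfolding X_def by (cases "c 0 n \<le> c 1 n") auto
        define s where "s = P i ^ n + (1 - P i)^n"
        have s1: "s < 1" unfolding s_def using P[OF i(1)] nN by (intro pow_sum_lt1) auto
        have "X \<le> E + (X - E) * s" using key[OF i(1)] i(2) by (simp add: s_def)
        moreover have "(X - E) * (1 - s) = (X - E) - (X - E) * s" by (simp add: right_diff_distrib)
        ultimately have "(X - E) * (1 - s) \<le> 0" by linarith
        then show ?thesis using s1 by (simp add: mult_le_0_iff)
      qed
      then show ?thesis unfolding X_def by auto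
    qed
  qed
  show ?thesis
  proof (intro exI allI impI ballI)
    fix n i :: nat assume "1 \<le> n" "i \<in> {0::nat,1}"
    then have "c i n \<le> E" using main by auto
    then show "b i n \<le> E * real n" using \<open>1 \<le> n\<close> by (simp add: c_def field_simps)
  qed
qed


lemma gap_lower:
  fixes \<theta> :: "nat \<Rightarrow> real" and d p :: real
  assumes "0 \<le> p" "p \<le> 1" 
    and pw: "\<And>k. k \<le> n \<Longrightarrow> d * (real k * real (n-k)) \<le> \<theta> n - \<theta> k - \<theta> (n-k)"
  shows "d * (real n * (real n - 1) * p * (1-p)) \<le>
     \<theta> n - (\<Sum>k\<le>n. Bn n p k * \<theta> k) - (\<Sum>k\<le>n. Bn n p k * \<theta> (n-k))"
proof -
  have "d * (real n * (real n - 1) * p * (1-p)) = (\<Sum>k\<le>n. Bn n p k * (d * (real k * real (n-k))))"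
    unfolding Bn_sum2[symmetric] by (simp add: sum_distrib_left ac_simps)
  also have "\<dots> \<le> (\<Sum>k\<le>n. Bn n p k * (\<theta> n - \<theta> k - \<theta> (n-k)))"
    by (intro sum_mono mult_left_mono pw Bn_nonneg) (use assms in auto)
  also have "\<dots> = (\<Sum>k\<le>n. Bn n p k) * \<theta> n - (\<Sum>k\<le>n. Bn n p k * \<theta> k) - (\<Sum>k\<le>n. Bn n p k * \<theta> (n-k))"
    by (simp add: right_diff_distrib sum_subtractf sum_distrib_right)
  finally show ?thesis by (simp add: Bn_sum)
qed

lemma bound:
  fixes a eps :: "nat \<Rightarrow> nat \<Rightarrow> real" and P \<theta> :: "nat \<Rightarrow> real" and C :: real and N :: nat
  assumes P: "\<And>i. i \<in> {0,1} \<Longrightarrow> 0 < P i \<and> P i < 1"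
  and rec: "\<And>i n. i \<in> {0,1} \<Longrightarrow> n \<ge> 1 \<Longrightarrow>
     a i n = (\<Sum>k\<le>n. Bn n (P i) k * a 0 k) + (\<Sum>k\<le>n. Bn n (P i) k * a 1 (n-k)) + eps i n"
  and \<theta>0: "\<theta> 0 = 0"
  and gap: "\<And>i n. i \<in> {0,1} \<Longrightarrow> n \<ge> N \<Longrightarrow>
     eps i n + (1 - P i)^n * a 0 0 + P i ^ n * a 1 0 \<le>
       C * (\<theta> n - (\<Sum>k\<le>n. Bn n (P i) k * \<theta> k) - (\<Sum>k\<le>n. Bn n (P i) k * \<theta> (n-k)))"
  shows "\<exists>E. \<forall>n\<ge>1. \<forall>i\<in>{0,1}. a i n \<le> C * \<theta> n + E * real n"
proof -
  define b where "b i n = a i n - C * \<theta> n" for i n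
  have "\<exists>E. \<forall>n\<ge>1. \<forall>i\<in>{0,1}. b i n \<le> E * real n"
  proof (rule max_principle[where P = P and N = "max N 1"])
    show "0 < P i \<and> P i < 1" if "i \<in> {0,1}" for i using P that .
  next
    fix i n assume i: "i \<in> {0::nat,1}" and n: "max N 1 \<le> n"
    define p where "p = P i"
    have e1: "(\<Sum>k\<le>n. Bn n p k * b 0 k) = (\<Sum>k\<le>n. Bn n p k * a 0 k) - C * (\<Sum>k\<le>n. Bn n p k * \<theta> k)"
      by (simp add: b_def right_diff_distrib sum_subtractf sum_distrib_left ac_simps)
    have e2: "(\<Sum>k\<le>n. Bn n p k * b 1 (n-k)) = (\<Sum>k\<le>n. Bn n p k * a 1 (n-k)) - C * (\<Sum>k\<le>n. Bn n p k * \<theta> (n-k))"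
      by (simp add: b_def right_diff_distrib sum_subtractf sum_distrib_left ac_simps)
    have r: "a i n = (\<Sum>k\<le>n. Bn n p k * a 0 k) + (\<Sum>k\<le>n. Bn n p k * a 1 (n-k)) + eps i n"
      using rec[OF i] n unfolding p_def by auto
    have g: "eps i n + (1 - p)^n * a 0 0 + p ^ n * a 1 0 \<le>
       C * (\<theta> n - (\<Sum>k\<le>n. Bn n p k * \<theta> k) - (\<Sum>k\<le>n. Bn n p k * \<theta> (n-k)))"
      using gap[OF i] n unfolding p_def by auto
    have "b i n \<le> (\<Sum>k\<le>n. Bn n p k * b 0 k) + (\<Sum>k\<le>n. Bn n p k * b 1 (n-k))
              - (1 - p)^n * b 0 0 - p ^ n * b 1 0"
      unfolding e1 e2 using r g by (simp add: b_def \<theta>0 right_diff_distrib)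
    then show "b i n \<le> (\<Sum>k\<le>n. Bn n (P i) k * b 0 k) + (\<Sum>k\<le>n. Bn n (P i) k * b 1 (n-k))
              - (1 - P i)^n * b 0 0 - P i ^ n * b 1 0" unfolding p_def .
  qed
  then obtain E where E: "\<forall>n\<ge>1. \<forall>i\<in>{0,1}. b i n \<le> E * real n" by blast
  show ?thesis by (rule exI[of _ E]) (use E in \<open>auto simp: b_def\<close>)
qed



lemma zpow_upper:
  fixes z s :: real
  assumes "0 \<le> z" "z \<le> 1" "0 < s"
  shows "z powr s \<le> 1 - min s 1 * (1 - z)"
proof (cases "z = 0")
  case True then show ?thesis using assms by (simp add: min_def)
next
  case False
  then have z: "0 < z" using assms by simp
  show ?thesis
  proof (cases "s \<ge> 1")
    case True
    then have "z powr s \<le> z" using powr_le_one_le[of z s] z assms by simp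
    then show ?thesis using True by simp
  next
    case False
    have "z powr s * 1 powr (1 - s) \<le> s * z + (1 - s) * 1"
      by (rule Youngs_inequality_0) (use assms False z in auto)
    then show ?thesis using False by (simp add: algebra_simps)
  qed
qed

lemma zpow_lower:
  fixes z u :: real
  assumes "0 < z" "z \<le> 1" "0 < u"
  shows "1 + u * (1 - z) \<le> z powr (-u)"
proof -
  have "ln z \<le> z - 1" using assms by (intro ln_le_minus_one) auto
  then have "1 - z \<le> - ln z" by simp
  then have "u * (1 - z) \<le> u * (- ln z)" using assms by (intro mult_left_mono) auto
  then have "1 + u * (1 - z) \<le> 1 + (-u * ln z)" by simp
  also have "\<dots> \<le> exp (-u * ln z)" by (rule exp_ge_add_one_self)
  also have "\<dots> = z powr (-u)" using assms by (simp add: powr_def)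
  finally show ?thesis .
qed

lemma half_A:
  fixes x n \<alpha> :: real
  assumes "0 \<le> x" "x \<le> n" "0 < n" "1 < \<alpha>"
  shows "min (\<alpha>-1) 1 * (x * (n - x)) * n powr (\<alpha> - 2) \<le> x * n powr (\<alpha> - 1) - x powr \<alpha>"
proof (cases "x = 0")
  case True then show ?thesis by simp
next
  case False
  then have x: "0 < x" using assms by simp
  define r where "r = min (\<alpha>-1) 1"
  have "(x/n) powr (\<alpha>-1) \<le> 1 - r * (1 - x/n)"
    unfolding r_def by (rule zpow_upper) (use assms x in auto)
  then have "x * n powr (\<alpha>-1) * (x/n) powr (\<alpha>-1) \<le> x * n powr (\<alpha>-1) * (1 - r * (1 - x/n))"
    using x assms by (intro mult_left_mono) auto
  moreover have "x * n powr (\<alpha>-1) * (x/n) powr (\<alpha>-1) = x powr \<alpha>"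
  proof -
    have "n powr (\<alpha>-1) * (x/n) powr (\<alpha>-1) = x powr (\<alpha>-1)"
      using x assms by (simp add: powr_divide)
    moreover have "x * x powr (\<alpha>-1) = x powr \<alpha>"
      using x by (simp add: powr_mult_base)
    ultimately show ?thesis by (simp add: mult.assoc)
  qed
  moreover have "x * n powr (\<alpha>-1) * (1 - r * (1 - x/n)) = x * n powr (\<alpha> - 1) - r * (x * (n - x)) * n powr (\<alpha> - 2)"
  proof -
    have "n powr (\<alpha> - 1) = n * n powr (\<alpha> - 2)" using assms by (simp add: powr_mult_base)
    then show ?thesis using assms by (simp add: field_simps)
  qed
  ultimately show ?thesis unfolding r_def by linarith
qed

lemma half_B:
  fixes x n t :: real
  assumes "0 \<le> x" "x \<le> n" "0 < n" "t < 1"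
  shows "(1 - t) * (x * (n - x)) * n powr (t - 2) \<le> x powr t - x * n powr (t - 1)"
proof (cases "x = 0")
  case True then show ?thesis by simp
next
  case False
  then have x: "0 < x" using assms by simp
  have "1 + (1-t) * (1 - x/n) \<le> (x/n) powr (-(1-t))"
    by (rule zpow_lower) (use assms x in auto)
  then have "x * n powr (t-1) * (1 + (1-t) * (1 - x/n)) \<le> x * n powr (t-1) * (x/n) powr (t-1)"
    using x assms by (intro mult_left_mono) auto
  moreover have "x * n powr (t-1) * (x/n) powr (t-1) = x powr t"
  proof -
    have "n powr (t-1) * (x/n) powr (t-1) = x powr (t-1)"
      using x assms by (simp add: powr_divide)
    moreover have "x * x powr (t-1) = x powr t"
      using x by (simp add: powr_mult_base)
    ultimately show ?thesis by (simp add: mult.assoc)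
  qed
  moreover have "x * n powr (t-1) * (1 + (1-t) * (1 - x/n)) = x * n powr (t - 1) + (1-t) * (x * (n - x)) * n powr (t - 2)"
  proof -
    have "n powr (t - 1) = n * n powr (t - 2)" using assms by (simp add: powr_mult_base)
    then show ?thesis using assms by (simp add: field_simps)
  qed
  ultimately show ?thesis by linarith
qed

lemma half_C:
  fixes x n :: real
  assumes "0 \<le> x" "x \<le> n" "0 < n"
  shows "x * (n - x) / n \<le> x * (ln n - ln x)"
proof (cases "x = 0")
  case True then show ?thesis by simp
next
  case False
  then have x: "0 < x" using assms by simp
  have "ln (x/n) \<le> x/n - 1" using x assms by (intro ln_le_minus_one) auto
  then have "1 - x/n \<le> ln n - ln x" using x assms by (simp add: ln_div)
  then have "x * (1 - x/n) \<le> x * (ln n - ln x)" using x by (intro mult_left_mono) auto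
  then show ?thesis using assms by (simp add: field_simps)
qed



lemma final_bound:
  fixes a eps :: "nat \<Rightarrow> nat \<Rightarrow> real" and P \<theta> :: "nat \<Rightarrow> real" and K cz \<tau> \<alpha> :: real and Nz :: nat
  assumes P: "\<And>i. i \<in> {0,1} \<Longrightarrow> 0 < P i \<and> P i < 1"
  and rec: "\<And>i n. i \<in> {0,1} \<Longrightarrow> n \<ge> 1 \<Longrightarrow>
     a i n = (\<Sum>k\<le>n. Bn n (P i) k * a 0 k) + (\<Sum>k\<le>n. Bn n (P i) k * a 1 (n-k)) + eps i n"
  and \<theta>0: "\<theta> 0 = 0"
  and \<tau>: "0 \<le> \<tau>" "\<alpha> \<le> \<tau>" and K: "0 \<le> K" and cz: "0 < cz"
  and epsb: "\<And>i n. i \<in> {0,1} \<Longrightarrow> n \<ge> Nz \<Longrightarrow> \<bar>eps i n\<bar> \<le> K * real n powr \<alpha>"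
  and gapb: "\<And>i n. i \<in> {0,1} \<Longrightarrow> n \<ge> 2 \<Longrightarrow>
     cz * real n powr \<tau> \<le> \<theta> n - (\<Sum>k\<le>n. Bn n (P i) k * \<theta> k) - (\<Sum>k\<le>n. Bn n (P i) k * \<theta> (n-k))"
  shows "\<exists>C E. C \<ge> 0 \<and> (\<forall>n\<ge>1. \<forall>i\<in>{0,1}. \<bar>a i n\<bar> \<le> C * \<bar>\<theta> n\<bar> + E * real n)"
proof -
  define C where "C = (K + \<bar>a 0 0\<bar> + \<bar>a 1 0\<bar>) / cz"
  have C0: "C \<ge> 0" unfolding C_def using K cz by auto
  define N where "N = max Nz 2"
  have gen: "eps' i n + (1 - P i)^n * a' 0 0 + P i ^ n * a' 1 0 \<le>
       C * (\<theta> n - (\<Sum>k\<le>n. Bn n (P i) k * \<theta> k) - (\<Sum>k\<le>n. Bn n (P i) k * \<theta> (n-k)))"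
    if i: "i \<in> {0,1}" and n: "n \<ge> N" and e: "\<bar>eps' i n\<bar> = \<bar>eps i n\<bar>"
      and a': "\<bar>a' 0 0\<bar> = \<bar>a 0 0\<bar>" "\<bar>a' 1 0\<bar> = \<bar>a 1 0\<bar>" for eps' a' :: "nat \<Rightarrow> nat \<Rightarrow> real" and i n
  proof -
    have n1: "real n \<ge> 1" using n unfolding N_def by auto
    have p: "0 < P i" "P i < 1" using P[OF i] by auto
    have q1: "(1 - P i)^n \<le> 1" "0 \<le> (1 - P i)^n" using p by (auto intro: power_le_one)
    have p1: "P i ^ n \<le> 1" "0 \<le> P i ^ n" using p by (auto intro: power_le_one)
    have "(1 - P i)^n * a' 0 0 \<le> \<bar>a 0 0\<bar>"
    proof -
      have "(1 - P i)^n * a' 0 0 \<le> (1 - P i)^n * \<bar>a' 0 0\<bar>" using q1 by (intro mult_left_mono) auto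
      also have "\<dots> \<le> 1 * \<bar>a' 0 0\<bar>" using q1 by (intro mult_right_mono) auto
      finally show ?thesis using a' by simp
    qed
    moreover have "P i ^ n * a' 1 0 \<le> \<bar>a 1 0\<bar>"
    proof -
      have "P i ^ n * a' 1 0 \<le> P i ^ n * \<bar>a' 1 0\<bar>" using p1 by (intro mult_left_mono) auto
      also have "\<dots> \<le> 1 * \<bar>a' 1 0\<bar>" using p1 by (intro mult_right_mono) auto
      finally show ?thesis using a' by simp
    qed
    moreover have "eps' i n \<le> K * real n powr \<tau>"
    proof -
      have "eps' i n \<le> K * real n powr \<alpha>" using epsb[OF i] n e unfolding N_def by force
      also have "\<dots> \<le> K * real n powr \<tau>" using n1 \<tau> K by (intro mult_left_mono powr_mono) auto
      finally show ?thesis .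
    qed
    moreover have "\<bar>a 0 0\<bar> \<le> \<bar>a 0 0\<bar> * real n powr \<tau>" "\<bar>a 1 0\<bar> \<le> \<bar>a 1 0\<bar> * real n powr \<tau>"
    proof -
      have "1 \<le> real n powr \<tau>" using n1 \<tau> by (simp add: ge_one_powr_ge_zero)
      then show "\<bar>a 0 0\<bar> \<le> \<bar>a 0 0\<bar> * real n powr \<tau>" "\<bar>a 1 0\<bar> \<le> \<bar>a 1 0\<bar> * real n powr \<tau>"
        using mult_left_mono[of 1 "real n powr \<tau>" "\<bar>a 0 0\<bar>"] mult_left_mono[of 1 "real n powr \<tau>" "\<bar>a 1 0\<bar>"] by auto
    qed
    moreover have "(K + \<bar>a 0 0\<bar> + \<bar>a 1 0\<bar>) * real n powr \<tau> = K * real n powr \<tau> + \<bar>a 0 0\<bar> * real n powr \<tau> + \<bar>a 1 0\<bar> * real n powr \<tau>"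
      by (simp add: distrib_right)
    ultimately have "eps' i n + (1 - P i)^n * a' 0 0 + P i ^ n * a' 1 0 \<le> (K + \<bar>a 0 0\<bar> + \<bar>a 1 0\<bar>) * real n powr \<tau>"
      by linarith
    also have "\<dots> = C * (cz * real n powr \<tau>)" unfolding C_def using cz by simp
    also have "\<dots> \<le> C * (\<theta> n - (\<Sum>k\<le>n. Bn n (P i) k * \<theta> k) - (\<Sum>k\<le>n. Bn n (P i) k * \<theta> (n-k)))"
      using gapb[OF i] n C0 unfolding N_def by (intro mult_left_mono) auto
    finally show ?thesis .
  qed
  obtain E1 where E1: "\<forall>n\<ge>1. \<forall>i\<in>{0,1}. a i n \<le> C * \<theta> n + E1 * real n"
    using bound[where a = a and eps = eps and P = P and \<theta> = \<theta> and C = C and N = N, OF P rec \<theta>0]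
      gen[where eps' = eps and a' = a] by auto
  have recn: "- a i n = (\<Sum>k\<le>n. Bn n (P i) k * - a 0 k) + (\<Sum>k\<le>n. Bn n (P i) k * - a 1 (n-k)) + - eps i n"
    if "i \<in> {0,1}" "n \<ge> 1" for i n
    using rec[OF that] by (simp add: sum_negf)
  obtain E2 where E2: "\<forall>n\<ge>1. \<forall>i\<in>{0,1}. - a i n \<le> C * \<theta> n + E2 * real n"
    using bound[where a = "\<lambda>i n. - a i n" and eps = "\<lambda>i n. - eps i n" and P = P and \<theta> = \<theta> and C = C and N = N,
        OF P recn \<theta>0] gen[where eps' = "\<lambda>i n. - eps i n" and a' = "\<lambda>i n. - a i n"] by auto
  show ?thesis
  proof (intro exI conjI allI impI ballI)
    show "C \<ge> 0" by (rule C0)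
  next
    fix n i :: nat assume n: "1 \<le> n" and i: "i \<in> {0,1}"
    have "C * \<theta> n \<le> C * \<bar>\<theta> n\<bar>" using C0 by (intro mult_left_mono) auto
    moreover have "E1 * real n \<le> (\<bar>E1\<bar> + \<bar>E2\<bar>) * real n" "E2 * real n \<le> (\<bar>E1\<bar> + \<bar>E2\<bar>) * real n"
      by (intro mult_right_mono; simp)+
    moreover have "a i n \<le> C * \<theta> n + E1 * real n" "- a i n \<le> C * \<theta> n + E2 * real n"
      using E1 E2 n i by auto
    ultimately show "\<bar>a i n\<bar> \<le> C * \<bar>\<theta> n\<bar> + (\<bar>E1\<bar> + \<bar>E2\<bar>) * real n"
      by linarith
  qed
qed



lemma bigO_from_bound:
  fixes f g h :: "nat \<Rightarrow> real"
  assumes "\<forall>n\<ge>1. \<bar>f n\<bar> \<le> C * \<bar>h n\<bar> + E * real n" "\<forall>n\<ge>M. \<bar>h n\<bar> \<le> g n" "\<forall>n\<ge>M. real n \<le> g n" "C \<ge> 0"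
  shows "f \<in> O(g)"
proof (rule bigoI[where c = "C + \<bar>E\<bar>"])
  show "eventually (\<lambda>n. norm (f n) \<le> (C + \<bar>E\<bar>) * norm (g n)) at_top"
    unfolding eventually_at_top_linorder
  proof (intro exI[of _ "max M 1"] allI impI)
    fix n assume n: "max M 1 \<le> n"
    have 1: "\<bar>f n\<bar> \<le> C * \<bar>h n\<bar> + E * real n" using assms(1) n by auto
    have 2: "C * \<bar>h n\<bar> \<le> C * g n" using assms(2,4) n by (intro mult_left_mono) auto
    have 3: "E * real n \<le> \<bar>E\<bar> * g n" using assms(3) n
      by (metis abs_ge_self abs_ge_zero max.boundedE mult_mono of_nat_0_le_iff)
    have 4: "C * g n \<le> C * \<bar>g n\<bar>" using assms(4) by (intro mult_left_mono) auto
    have 5: "\<bar>E\<bar> * g n \<le> \<bar>E\<bar> * \<bar>g n\<bar>" by (intro mult_left_mono) auto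
    have "\<bar>f n\<bar> \<le> C * \<bar>g n\<bar> + \<bar>E\<bar> * \<bar>g n\<bar>" using 1 2 3 4 5 by linarith
    then show "norm (f n) \<le> (C + \<bar>E\<bar>) * norm (g n)" by (simp add: distrib_right)
  qed
qed

lemma gap_arith:
  fixes A n m0 q :: real
  assumes "0 \<le> A" "2 \<le> n" "0 < m0" "m0 \<le> q"
  shows "A * (n * n) * m0 \<le> 2 * A * (n * (n - 1) * q)"
proof -
  have "n * m0 \<le> (2 * (n - 1)) * q" using assms by (intro mult_mono) auto
  then have "n * (n * m0) \<le> n * ((2 * (n - 1)) * q)" using assms by (intro mult_left_mono) auto
  then have "A * (n * (n * m0)) \<le> A * (n * ((2 * (n - 1)) * q))" using assms by (intro mult_left_mono) auto
  then show ?thesis by (simp add: algebra_simps)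
qed



theorem lemma4p1:
  fixes p :: "nat \<Rightarrow> nat \<Rightarrow> real"
    and a eps :: "nat \<Rightarrow> nat \<Rightarrow> real"
    and \<alpha> :: real
  assumes p_range: "\<And>i j. i \<in> {0,1} \<Longrightarrow> j \<in> {0,1} \<Longrightarrow> p i j \<in> {0<..<1}"
    and p_stoch: "\<And>i. i \<in> {0,1} \<Longrightarrow> p i 0 + p i 1 = 1"
    and rec: "\<And>i n. i \<in> {0,1} \<Longrightarrow> n \<ge> 1 \<Longrightarrow>
      a i n = measure_pmf.expectation (binomial_pmf n (p i 0)) (\<lambda>k. a 0 k)
            + measure_pmf.expectation (binomial_pmf n (p i 0)) (\<lambda>k. a 1 (n - k))
            + eps i n"
    and eps_O: "\<And>i. i \<in> {0,1} \<Longrightarrow> (\<lambda>n. eps i n) \<in> O(\<lambda>n. real n powr \<alpha>)"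
  shows "\<forall>i\<in>{0,1}.
      (\<alpha> < 1 \<longrightarrow> (\<lambda>n. a i n) \<in> O(\<lambda>n. real n)) \<and>
      (\<alpha> > 1 \<longrightarrow> (\<lambda>n. a i n) \<in> O(\<lambda>n. real n powr \<alpha>)) \<and>
      (\<alpha> = 1 \<longrightarrow> (\<lambda>n. a i n) \<in> O(\<lambda>n. real n * ln (real n)))"
proof -
  define P where "P i = p i 0" for i
  have P: "0 < P i \<and> P i < 1" if "i \<in> {0,1}" for i
    using p_range[OF that, of 0] by (auto simp: P_def)
  have recs: "a i n = (\<Sum>k\<le>n. Bn n (P i) k * a 0 k) + (\<Sum>k\<le>n. Bn n (P i) k * a 1 (n-k)) + eps i n"
    if i: "i \<in> {0,1}" "n \<ge> 1" for i n
  proof -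
    have pi: "p i 0 \<in> {0..1}" using P[OF i(1)] by (auto simp: P_def)
    show ?thesis using rec[OF i] unfolding expectation_binomial_pmf'[OF pi] by (simp add: Bn_def P_def)
  qed
  have epsK: "\<exists>K N. 0 \<le> K \<and> (\<forall>n\<ge>N. \<bar>eps i n\<bar> \<le> K * real n powr \<alpha>)" if "i \<in> {0,1}" for i
  proof -
    from eps_O[OF that] obtain c where c: "c > 0"
      "eventually (\<lambda>n. norm (eps i n) \<le> c * norm (real n powr \<alpha>)) at_top"
      by (elim landau_o.bigE)
    then obtain N where "\<forall>n\<ge>N. norm (eps i n) \<le> c * norm (real n powr \<alpha>)"
      by (auto simp: eventually_at_top_linorder)
    then show ?thesis using c(1) by (intro exI[of _ c] exI[of _ N]) auto
  qed
  obtain K0 N0 where K0: "0 \<le> K0" "\<forall>n\<ge>N0. \<bar>eps 0 n\<bar> \<le> K0 * real n powr \<alpha>" using epsK[of 0] by auto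
  obtain K1 N1 where K1: "0 \<le> K1" "\<forall>n\<ge>N1. \<bar>eps 1 n\<bar> \<le> K1 * real n powr \<alpha>" using epsK[of 1] by auto
  define K where "K = max K0 K1"
  define N where "N = max N0 N1"
  have K: "0 \<le> K" using K0 unfolding K_def by auto
  have epsb: "\<bar>eps i n\<bar> \<le> K * real n powr \<alpha>" if "i \<in> {0,1}" "n \<ge> N" for i n
  proof -
    have "K0 * real n powr \<alpha> \<le> K * real n powr \<alpha>" "K1 * real n powr \<alpha> \<le> K * real n powr \<alpha>"
      unfolding K_def by (intro mult_right_mono; simp)+
    then show ?thesis using that K0 K1 unfolding N_def by auto
  qed
  define m0 where "m0 = min (P 0 * (1 - P 0)) (P 1 * (1 - P 1))"
  have m0: "0 < m0" unfolding m0_def using P[of 0] P[of 1] by auto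
  have m0le: "m0 \<le> P i * (1 - P i)" if "i \<in> {0,1}" for i unfolding m0_def using that by auto
  have P01: "0 \<le> P i" "P i \<le> 1" if "i \<in> {0,1}" for i using P[OF that] by auto

  have caseA: "\<forall>i\<in>{0,1}. (\<lambda>n. a i n) \<in> O(\<lambda>n. real n powr \<alpha>)" if \<alpha>: "\<alpha> > 1"
  proof -
    define \<theta> where "\<theta> k = real k powr \<alpha>" for k :: nat
    define r where "r = min (\<alpha> - 1) 1"
    have r: "0 < r" unfolding r_def using \<alpha> by auto
    have pw: "(2 * r * real n powr (\<alpha> - 2)) * (real k * real (n-k)) \<le> \<theta> n - \<theta> k - \<theta> (n-k)"
      if nk: "n \<ge> 1" "k \<le> n" for n k
    proof -
      have nk': "real n - real (n-k) = real k" "real n - real k = real (n-k)" using nk by (auto simp: of_nat_diff)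
      have "min (\<alpha>-1) 1 * (real k * (real n - real k)) * real n powr (\<alpha> - 2) \<le> real k * real n powr (\<alpha> - 1) - real k powr \<alpha>"
        by (rule half_A) (use nk \<alpha> in auto)
      then have h1: "r * (real k * real (n-k)) * real n powr (\<alpha> - 2) \<le> real k * real n powr (\<alpha> - 1) - real k powr \<alpha>"
        by (simp only: r_def[symmetric] nk')
      have "min (\<alpha>-1) 1 * (real (n-k) * (real n - real (n-k))) * real n powr (\<alpha> - 2) \<le> real (n-k) * real n powr (\<alpha> - 1) - real (n-k) powr \<alpha>"
        by (rule half_A) (use nk \<alpha> in auto)
      then have h2: "r * (real (n-k) * real k) * real n powr (\<alpha> - 2) \<le> real (n-k) * real n powr (\<alpha> - 1) - real (n-k) powr \<alpha>"
        by (simp only: r_def[symmetric] nk')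
      have e: "real k * real n powr (\<alpha> - 1) + real (n-k) * real n powr (\<alpha> - 1) = real n powr \<alpha>"
      proof -
        have "real k * real n powr (\<alpha> - 1) + real (n-k) * real n powr (\<alpha> - 1) = (real k + real (n-k)) * real n powr (\<alpha> - 1)"
          by (simp add: distrib_right)
        also have "real k + real (n-k) = real n" using nk' by linarith
        also have "real n * real n powr (\<alpha> - 1) = real n powr \<alpha>" using nk by (simp add: powr_mult_base)
        finally show ?thesis .
      qed
      have e2: "(2 * r * real n powr (\<alpha> - 2)) * (real k * real (n-k)) =
          r * (real k * real (n-k)) * real n powr (\<alpha> - 2) + r * (real (n-k) * real k) * real n powr (\<alpha> - 2)"
        by (simp add: algebra_simps)
      show ?thesis unfolding \<theta>_def using h1 h2 e e2 by linarith
    qed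
    have gap: "r * m0 * real n powr \<alpha> \<le> \<theta> n - (\<Sum>k\<le>n. Bn n (P i) k * \<theta> k) - (\<Sum>k\<le>n. Bn n (P i) k * \<theta> (n-k))"
      if i: "i \<in> {0,1}" and n: "n \<ge> 2" for i n
    proof -
      have g: "(2 * r * real n powr (\<alpha> - 2)) * (real n * (real n - 1) * P i * (1 - P i)) \<le>
         \<theta> n - (\<Sum>k\<le>n. Bn n (P i) k * \<theta> k) - (\<Sum>k\<le>n. Bn n (P i) k * \<theta> (n-k))"
        by (rule gap_lower) (use P01[OF i] pw n in auto)
      have "r * real n powr (\<alpha> - 2) * (real n * real n) * m0 \<le> 2 * (r * real n powr (\<alpha> - 2)) * (real n * (real n - 1) * (P i * (1 - P i)))"
        by (rule gap_arith) (use r n m0 m0le[OF i] in auto)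
      moreover have "real n powr \<alpha> = real n powr (\<alpha> - 2) * (real n * real n)"
        using powr_add[of "real n" "\<alpha> - 2" 2] n by (simp add: power2_eq_square)
      ultimately show ?thesis using g by (simp add: ac_simps)
    qed
    obtain C E where CE: "C \<ge> 0" "\<forall>n\<ge>1. \<forall>i\<in>{0,1}. \<bar>a i n\<bar> \<le> C * \<bar>\<theta> n\<bar> + E * real n"
      using final_bound[where P = P and a = a and eps = eps and \<theta> = \<theta> and \<tau> = \<alpha> and \<alpha> = \<alpha> and K = K
          and cz = "r * m0" and Nz = N, OF P recs _ _ _ K _ epsb gap] r m0 \<alpha>
      by (auto simp: \<theta>_def)
    show ?thesis
    proof
      fix i :: nat assume i: "i \<in> {0,1}"
      show "(\<lambda>n. a i n) \<in> O(\<lambda>n. real n powr \<alpha>)"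
      proof (rule bigO_from_bound[where C = C and E = E and h = \<theta> and M = 1])
        show "\<forall>n\<ge>1. \<bar>a i n\<bar> \<le> C * \<bar>\<theta> n\<bar> + E * real n" using CE i by auto
        show "\<forall>n\<ge>1. \<bar>\<theta> n\<bar> \<le> real n powr \<alpha>" by (simp add: \<theta>_def)
        show "\<forall>n\<ge>1. real n \<le> real n powr \<alpha>"
        proof (intro allI impI)
          fix n :: nat assume "1 \<le> n"
          then have "real n powr 1 \<le> real n powr \<alpha>" using \<alpha> by (intro powr_mono) auto
          then show "real n \<le> real n powr \<alpha>" using \<open>1 \<le> n\<close> by simp
        qed
      qed (rule CE(1))
    qed
  qed

  have caseB: "\<forall>i\<in>{0,1}. (\<lambda>n. a i n) \<in> O(\<lambda>n. real n)" if \<alpha>: "\<alpha> < 1"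
  proof -
    define t where "t = max \<alpha> (1/2)"
    have t: "1/2 \<le> t" "t < 1" "\<alpha> \<le> t" unfolding t_def using \<alpha> by auto
    define \<theta> where "\<theta> k = - (real k powr t)" for k :: nat
    have pw: "(2 * (1 - t) * real n powr (t - 2)) * (real k * real (n-k)) \<le> \<theta> n - \<theta> k - \<theta> (n-k)"
      if nk: "n \<ge> 1" "k \<le> n" for n k
    proof -
      have nk': "real n - real (n-k) = real k" "real n - real k = real (n-k)" using nk by (auto simp: of_nat_diff)
      have "(1 - t) * (real k * (real n - real k)) * real n powr (t - 2) \<le> real k powr t - real k * real n powr (t - 1)"
        by (rule half_B) (use nk t in auto)
      then have h1: "(1 - t) * (real k * real (n-k)) * real n powr (t - 2) \<le> real k powr t - real k * real n powr (t - 1)"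
        by (simp only: nk')
      have "(1 - t) * (real (n-k) * (real n - real (n-k))) * real n powr (t - 2) \<le> real (n-k) powr t - real (n-k) * real n powr (t - 1)"
        by (rule half_B) (use nk t in auto)
      then have h2: "(1 - t) * (real (n-k) * real k) * real n powr (t - 2) \<le> real (n-k) powr t - real (n-k) * real n powr (t - 1)"
        by (simp only: nk')
      have e: "real k * real n powr (t - 1) + real (n-k) * real n powr (t - 1) = real n powr t"
      proof -
        have "real k * real n powr (t - 1) + real (n-k) * real n powr (t - 1) = (real k + real (n-k)) * real n powr (t - 1)"
          by (simp add: distrib_right)
        also have "real k + real (n-k) = real n" using nk' by linarith
        also have "real n * real n powr (t - 1) = real n powr t" using nk by (simp add: powr_mult_base)
        finally show ?thesis .
      qed
      have e2: "(2 * (1 - t) * real n powr (t - 2)) * (real k * real (n-k)) =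
          (1 - t) * (real k * real (n-k)) * real n powr (t - 2) + (1 - t) * (real (n-k) * real k) * real n powr (t - 2)"
        by (simp add: algebra_simps)
      show ?thesis unfolding \<theta>_def using h1 h2 e e2 by linarith
    qed
    have gap: "(1 - t) * m0 * real n powr t \<le> \<theta> n - (\<Sum>k\<le>n. Bn n (P i) k * \<theta> k) - (\<Sum>k\<le>n. Bn n (P i) k * \<theta> (n-k))"
      if i: "i \<in> {0,1}" and n: "n \<ge> 2" for i n
    proof -
      have g: "(2 * (1 - t) * real n powr (t - 2)) * (real n * (real n - 1) * P i * (1 - P i)) \<le>
         \<theta> n - (\<Sum>k\<le>n. Bn n (P i) k * \<theta> k) - (\<Sum>k\<le>n. Bn n (P i) k * \<theta> (n-k))"
        by (rule gap_lower) (use P01[OF i] pw n in auto)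
      have "(1 - t) * real n powr (t - 2) * (real n * real n) * m0 \<le> 2 * ((1 - t) * real n powr (t - 2)) * (real n * (real n - 1) * (P i * (1 - P i)))"
        by (rule gap_arith) (use t n m0 m0le[OF i] in auto)
      moreover have "real n powr t = real n powr (t - 2) * (real n * real n)"
        using powr_add[of "real n" "t - 2" 2] n by (simp add: power2_eq_square)
      then have "(1 - t) * m0 * real n powr t = (1 - t) * real n powr (t - 2) * (real n * real n) * m0"
        by (simp only: mult_ac)
      moreover have "2 * ((1 - t) * real n powr (t - 2)) * (real n * (real n - 1) * (P i * (1 - P i))) =
          (2 * (1 - t) * real n powr (t - 2)) * (real n * (real n - 1) * P i * (1 - P i))"
        by (simp only: mult_ac)
      ultimately show ?thesis using g by linarith
    qed
    obtain C E where CE: "C \<ge> 0" "\<forall>n\<ge>1. \<forall>i\<in>{0,1}. \<bar>a i n\<bar> \<le> C * \<bar>\<theta> n\<bar> + E * real n"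
      using final_bound[where P = P and a = a and eps = eps and \<theta> = \<theta> and \<tau> = t and \<alpha> = \<alpha> and K = K
          and cz = "(1 - t) * m0" and Nz = N, OF P recs _ _ _ K _ epsb gap] t m0
      by (auto simp: \<theta>_def)
    show ?thesis
    proof
      fix i :: nat assume i: "i \<in> {0,1}"
      show "(\<lambda>n. a i n) \<in> O(\<lambda>n. real n)"
      proof (rule bigO_from_bound[where C = C and E = E and h = \<theta> and M = 1])
        show "\<forall>n\<ge>1. \<bar>a i n\<bar> \<le> C * \<bar>\<theta> n\<bar> + E * real n" using CE i by auto
        show "\<forall>n\<ge>1. \<bar>\<theta> n\<bar> \<le> real n"
        proof (intro allI impI)
          fix n :: nat assume "1 \<le> n"
          then have "real n powr t \<le> real n powr 1" using t by (intro powr_mono) auto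
          then show "\<bar>\<theta> n\<bar> \<le> real n" using \<open>1 \<le> n\<close> by (simp add: \<theta>_def)
        qed
        show "\<forall>n\<ge>1. real n \<le> real n" by simp
      qed (rule CE(1))
    qed
  qed

  have caseC: "\<forall>i\<in>{0,1}. (\<lambda>n. a i n) \<in> O(\<lambda>n. real n * ln (real n))" if \<alpha>: "\<alpha> = 1"
  proof -
    define \<theta> where "\<theta> k = real k * ln (real k)" for k :: nat
    have pw: "(2 * (1 / real n)) * (real k * real (n-k)) \<le> \<theta> n - \<theta> k - \<theta> (n-k)"
      if nk: "n \<ge> 1" "k \<le> n" for n k
    proof -
      have nk': "real n - real (n-k) = real k" "real n - real k = real (n-k)" using nk by (auto simp: of_nat_diff)
      have "real k * (real n - real k) / real n \<le> real k * (ln (real n) - ln (real k))"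
        by (rule half_C) (use nk in auto)
      then have h1: "real k * real (n-k) / real n \<le> real k * (ln (real n) - ln (real k))"
        by (simp only: nk')
      have "real (n-k) * (real n - real (n-k)) / real n \<le> real (n-k) * (ln (real n) - ln (real (n-k)))"
        by (rule half_C) (use nk in auto)
      then have h2: "real (n-k) * real k / real n \<le> real (n-k) * (ln (real n) - ln (real (n-k)))"
        by (simp only: nk')
      have e: "real k * ln (real n) + real (n-k) * ln (real n) = real n * ln (real n)"
      proof -
        have "real k * ln (real n) + real (n-k) * ln (real n) = (real k + real (n-k)) * ln (real n)"
          by (simp add: distrib_right)
        also have "real k + real (n-k) = real n" using nk' by linarith
        finally show ?thesis .
      qed
      have e2: "(2 * (1 / real n)) * (real k * real (n-k)) = real k * real (n-k) / real n + real (n-k) * real k / real n"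
        by (simp add: field_simps)
      have e3: "real k * (ln (real n) - ln (real k)) = real k * ln (real n) - real k * ln (real k)"
        "real (n-k) * (ln (real n) - ln (real (n-k))) = real (n-k) * ln (real n) - real (n-k) * ln (real (n-k))"
        by (simp_all add: right_diff_distrib)
      show ?thesis unfolding \<theta>_def using h1 h2 e e2 e3 by linarith
    qed
    have gap: "m0 * real n powr 1 \<le> \<theta> n - (\<Sum>k\<le>n. Bn n (P i) k * \<theta> k) - (\<Sum>k\<le>n. Bn n (P i) k * \<theta> (n-k))"
      if i: "i \<in> {0,1}" and n: "n \<ge> 2" for i n
    proof -
      have g: "(2 * (1 / real n)) * (real n * (real n - 1) * P i * (1 - P i)) \<le>
         \<theta> n - (\<Sum>k\<le>n. Bn n (P i) k * \<theta> k) - (\<Sum>k\<le>n. Bn n (P i) k * \<theta> (n-k))"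
        by (rule gap_lower) (use P01[OF i] pw n in auto)
      have "(1 / real n) * (real n * real n) * m0 \<le> 2 * (1 / real n) * (real n * (real n - 1) * (P i * (1 - P i)))"
        by (rule gap_arith) (use n m0 m0le[OF i] in auto)
      moreover have "(1 / real n) * (real n * real n) = real n powr 1" using n by simp
      then have "m0 * real n powr 1 = (1 / real n) * (real n * real n) * m0" by simp
      moreover have "2 * (1 / real n) * (real n * (real n - 1) * (P i * (1 - P i))) =
          (2 * (1 / real n)) * (real n * (real n - 1) * P i * (1 - P i))"
        by (simp only: mult_ac)
      ultimately show ?thesis using g by linarith
    qed
    obtain C E where CE: "C \<ge> 0" "\<forall>n\<ge>1. \<forall>i\<in>{0,1}. \<bar>a i n\<bar> \<le> C * \<bar>\<theta> n\<bar> + E * real n"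
      using final_bound[where P = P and a = a and eps = eps and \<theta> = \<theta> and \<tau> = 1 and \<alpha> = \<alpha> and K = K
          and cz = "m0" and Nz = N, OF P recs _ _ _ K _ epsb gap] m0 \<alpha>
      by (auto simp: \<theta>_def)
    show ?thesis
    proof
      fix i :: nat assume i: "i \<in> {0,1}"
      show "(\<lambda>n. a i n) \<in> O(\<lambda>n. real n * ln (real n))"
      proof (rule bigO_from_bound[where C = C and E = E and h = \<theta> and M = 3])
        show "\<forall>n\<ge>1. \<bar>a i n\<bar> \<le> C * \<bar>\<theta> n\<bar> + E * real n" using CE i by auto
        show "\<forall>n\<ge>3. \<bar>\<theta> n\<bar> \<le> real n * ln (real n)"
          by (auto simp: \<theta>_def)
        show "\<forall>n\<ge>3. real n \<le> real n * ln (real n)"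
        proof (intro allI impI)
          fix n :: nat assume n3: "3 \<le> n"
          have "exp 1 \<le> real n" using exp_le n3 by linarith
          then have "ln (exp 1) \<le> ln (real n)" using n3 by (subst ln_le_cancel_iff) auto
          then have "1 \<le> ln (real n)" by simp
          then have "real n * 1 \<le> real n * ln (real n)" by (intro mult_left_mono) auto
          then show "real n \<le> real n * ln (real n)" by simp
        qed
      qed (rule CE(1))
    qed
  qed
  show ?thesis using caseA caseB caseC by auto
qed


end
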